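(* Let $k\ge 4$ be an integer, let $m$ be an integer with $$m\ge \min\left\{\left\lceil \frac{(k+2)(k-3)}{2k}\right\rceil,\ \left\lceil \sqrt{2k+\tfrac14}-\tfrac32\right\rceil\right\}-1,$$ and let $D\ge m2^{k-1}$ be a positive integer divisible by $4$. Then there exists a binary self-orthogonal $[N,k,D]$ Griesmer code, where $N=\sum_{i=0}^{k-1}\lceil D/2^i\rceil$.
   Context: A binary code is self-orthogonal if $C\subseteq C^\perp$. A binary $[N,k,D]$ code is a Griesmer code if $N=\sum_{i=0}^{k-1}\lceil D/2^i\rceil$. *)

theory Defs
  imports Complex_Main
begin

text \<open>Binary vectors of length N are represented as bool lists (True = 1),
  addition over GF(2) is componentwise exclusive or.\<close>

definition vadd :: "bool list \<Rightarrow> bool list \<Rightarrow> bool list" where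
  "vadd u v = map2 (\<noteq>) u v"

definition hweight :: "bool list \<Rightarrow> nat" where
  "hweight u = length (filter id u)"

definition zero_vec :: "nat \<Rightarrow> bool list" where
  "zero_vec N = replicate N False"

definition binner_zero :: "bool list \<Rightarrow> bool list \<Rightarrow> bool" where
  "binner_zero u v = even (length (filter id (map2 (\<and>) u v)))"

text \<open>A binary linear code of length N: a subspace of GF(2)^N
  (nonempty subset closed under addition; scalars are only 0 and 1).\<close>
definition binary_linear_code :: "nat \<Rightarrow> bool list set \<Rightarrow> bool" where
  "binary_linear_code N C \<longleftrightarrow>
     C \<subseteq> {u. length u = N} \<and> zero_vec N \<in> C \<and> (\<forall>u\<in>C. \<forall>v\<in>C. vadd u v \<in> C)"

text \<open>Binary [N,k,D] code: linear of length N, dimension k (i.e. 2^k codewords),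
  minimum distance (= minimum nonzero weight) exactly D.\<close>
definition binary_code_NkD :: "nat \<Rightarrow> nat \<Rightarrow> nat \<Rightarrow> bool list set \<Rightarrow> bool" where
  "binary_code_NkD N k D C \<longleftrightarrow>
     binary_linear_code N C \<and> card C = 2 ^ k \<and>
     (\<forall>u\<in>C. u \<noteq> zero_vec N \<longrightarrow> D \<le> hweight u) \<and>
     (\<exists>u\<in>C. u \<noteq> zero_vec N \<and> hweight u = D)"

definition self_orthogonal :: "bool list set \<Rightarrow> bool" where
  "self_orthogonal C \<longleftrightarrow> (\<forall>u\<in>C. \<forall>v\<in>C. binner_zero u v)"

definition griesmer_length :: "nat \<Rightarrow> nat \<Rightarrow> nat" where
  "griesmer_length k D = (\<Sum>i<k. nat \<lceil>real D / 2 ^ i\<rceil>)"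

end

theory Submission
  imports Defs "Berlekamp_Zassenhaus.Distinct_Degree_Factorization"
begin


type_synonym gf2 = "bool mod_ring"

lemma gf2_two: "(2::gf2) = 0"
  using of_nat_card_eq_0[where 'a=bool] by simp

lemma gf2_add_self: "(x::gf2) + x = 0"
proof -
  have "x + x = 2 * x" by simp
  thus ?thesis by (simp add: gf2_two)
qed

lemma gf2_poly_add_self: "(p::gf2 poly) + p = 0"
  by (rule poly_eqI) (simp only: coeff_add gf2_add_self coeff_0)

lemma gf2_cases: "(x::gf2) = 0 \<or> x = 1"
proof (rule ccontr)
  assume "\<not> ?thesis"
  then have "card {0, 1, x} = 3" by simp
  moreover have "card {0, 1, x} \<le> card (UNIV::gf2 set)" by (rule card_mono) auto
  ultimately show False by simp
qed

definition Qp :: "nat \<Rightarrow> gf2 poly" where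
  "Qp d = monom 1 1 ^ (2 ^ d) - monom 1 1"

lemma degree_Qp: "d \<ge> 1 \<Longrightarrow> degree (Qp d) = 2 ^ d"
proof -
  assume d: "d \<ge> 1"
  have "(2::nat) ^ d \<ge> 2" using power_increasing[of 1 d "2::nat"] d by simp
  then have "degree (monom (1::gf2) 1 ^ (2 ^ d)) = 2 ^ d"
    by (simp add: degree_power_eq degree_monom_eq)
  moreover have "degree (monom (1::gf2) 1) = 1" by (simp add: degree_monom_eq)
  ultimately show ?thesis unfolding Qp_def using \<open>(2::nat)^d \<ge> 2\<close>
    by (subst degree_minus_eq_right) auto
qed

lemma Qp_nz: "d \<ge> 1 \<Longrightarrow> Qp d \<noteq> 0"
  using degree_Qp[of d] by (intro notI) simp

lemma pderiv_Qp: "n \<ge> 1 \<Longrightarrow> pderiv (Qp n) = -1"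
proof -
  assume n: "n \<ge> 1"
  have "(of_nat (2 ^ n) :: gf2) = 0" using n gf2_two
    by (simp add: of_nat_power)
  then show ?thesis unfolding Qp_def
    by (simp add: pderiv_power pderiv_diff pderiv_monom)
qed

lemma square_free_Qp: "n \<ge> 1 \<Longrightarrow> square_free (Qp n)"
  apply (rule separable_imp_square_free)
  unfolding separable_def using pderiv_Qp[of n] by simp


lemma prod_pairwise_coprime_dvd:
  fixes f :: "'b \<Rightarrow> 'a::semiring_gcd"
  assumes "finite A" "\<And>i. i \<in> A \<Longrightarrow> f i dvd c"
    "\<And>i j. i \<in> A \<Longrightarrow> j \<in> A \<Longrightarrow> i \<noteq> j \<Longrightarrow> algebraic_semidom_class.coprime (f i) (f j)"
  shows "prod f A dvd c"
  using assms
proof (induction A rule: finite_induct)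
  case empty then show ?case by simp
next
  case (insert a A)
  have "algebraic_semidom_class.coprime (f a) (prod f A)"
    by (rule prod_coprime_right) (use insert in auto)
  then show ?case using insert by (simp add: divides_mult)
qed

lemma prime_factors_Qp_dvd:
  assumes "p \<in> prime_factors (Qp n)" "n \<ge> 1"
  shows "degree p \<le> n" "degree p \<ge> 1" "p dvd Qp (degree p)"
proof -
  have pr: "prime p" and dv: "p dvd Qp n" using assms by auto
  have irr: "irreducible p" using pr prime_def Factorial_Ring.algebraic_semidom_class.prime_elem_imp_irreducible by blast
  show "degree p \<ge> 1"
  proof -
    have nz: "p \<noteq> 0" using pr by auto
    have "\<not> is_unit p" using pr unfolding prime_def prime_elem_def by blast
    then have "degree p \<noteq> 0" using is_unit_iff_degree[OF nz] by blast
    then show ?thesis by simp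
  qed
  show "degree p \<le> n"
  proof (rule ccontr)
    assume "\<not> degree p \<le> n"
    then have "\<not> p dvd monom 1 1 ^ CARD(bool) ^ n - monom 1 1"
      using degree_divisor(2)[OF irr refl, of n] assms(2) by simp
    then show False using dv by (simp add: Qp_def)
  qed
  show "p dvd Qp (degree p)"
    using degree_divisor(1)[OF irr refl] by (simp add: Qp_def)
qed

lemma irreducible_exists:
  assumes n: "n \<ge> 1"
  shows "\<exists>f::gf2 poly. irreducible f \<and> monic f \<and> degree f = n"
proof (rule ccontr)
  assume no: "\<not> ?thesis"
  define Q where "Q = Qp n"
  have Qnz: "Q \<noteq> 0" using Qp_nz n by (simp add: Q_def)
  define PF where "PF = prime_factors Q"
  have finPF: "finite PF" unfolding PF_def by simp
  have sqf: "square_free Q" using square_free_Qp n by (simp add: Q_def)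
  have cnt: "count (prime_factorization Q) p = (if p \<in> PF then 1 else 0)" for p
  proof (cases "p \<in> PF")
    case True
    then have pr: "prime p" unfolding PF_def by auto
    have ge: "multiplicity p Q \<ge> 1"
      using True Qnz pr unfolding PF_def
      by (simp add: prime_factors_multiplicity)
    have le: "multiplicity p Q \<le> 1"
    proof (rule ccontr)
      assume "\<not> multiplicity p Q \<le> 1"
      then have "p ^ 2 dvd Q" by (intro multiplicity_dvd') simp
      then have "p * p dvd Q" by (simp add: power2_eq_square)
      moreover have "degree p > 0"
        using prime_factors_Qp_dvd(2)[of p n] True n unfolding PF_def Q_def by simp
      ultimately show False using sqf unfolding square_free_def by blast
    qed
    show ?thesis using True ge le pr by (simp add: count_prime_factorization_prime)
  next
    case False
    then show ?thesis unfolding PF_def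
      by (metis in_prime_factors_iff count_prime_factorization prime_factorization_empty_iff
          not_in_iff prime_factors_multiplicity)
  qed
  have pfeq: "prime_factorization Q = mset_set PF"
    by (rule multiset_eqI) (simp add: cnt count_mset_set finPF)
  have "normalize Q = prod_mset (prime_factorization Q)"
    using prod_mset_prime_factorization[OF Qnz] by simp
  also have "\<dots> = prod id PF" using pfeq by (simp add: prod_unfold_prod_mset)
  finally have nQ: "normalize Q = prod id PF" .
  have "degree Q = degree (prod id PF)" using nQ by (metis degree_normalize)
  also have "\<dots> = (\<Sum>p\<in>PF. degree p)"
    by (subst degree_prod_eq_sum_degree) (auto simp: PF_def)
  also have "\<dots> = (\<Sum>d<n. \<Sum>p\<in>{p \<in> PF. degree p = d}. degree p)"
  proof (rule sum.group[symmetric, OF finPF])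
    show "finite {..<n}" by simp
    show "degree ` PF \<subseteq> {..<n}"
    proof
      fix d assume "d \<in> degree ` PF"
      then obtain p where p: "p \<in> PF" "d = degree p" by auto
      have "degree p \<le> n" using prime_factors_Qp_dvd(1)[of p n] p n by (simp add: PF_def Q_def)
      moreover have "degree p \<noteq> n"
      proof
        assume "degree p = n"
        moreover have pr: "prime p" using p unfolding PF_def by auto
        moreover have "irreducible p" 
          using pr prime_def Factorial_Ring.algebraic_semidom_class.prime_elem_imp_irreducible by blast
        moreover have "p \<noteq> 0" using pr by auto
        then have "monic p" using monic_normalize[of p] normalize_prime[OF pr] by simp
        ultimately show False using no by blast
      qed
      ultimately show "d \<in> {..<n}" using p by auto
    qed
  qed
  also have "\<dots> \<le> (\<Sum>d<n. 2 ^ d)"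
  proof (rule sum_mono)
    fix d assume d: "d \<in> {..<n}"
    let ?A = "{p \<in> PF. degree p = d}"
    show "(\<Sum>p\<in>?A. degree p) \<le> 2 ^ d"
    proof (cases "d = 0")
      case True
      have "?A = {}"
        using prime_factors_Qp_dvd(2) n True unfolding PF_def Q_def by fastforce
      then show ?thesis using True by simp
    next
      case False
      have "(\<Sum>p\<in>?A. degree p) = degree (prod id ?A)"
        by (subst degree_prod_eq_sum_degree) (auto simp: PF_def)
      also have "\<dots> \<le> degree (Qp d)"
      proof (rule dvd_imp_degree_le)
        show "prod id ?A dvd Qp d"
        proof (rule prod_pairwise_coprime_dvd)
          show "finite ?A" using finPF by simp
          fix i assume "i \<in> ?A"
          then show "id i dvd Qp d"
            using prime_factors_Qp_dvd(3)[of i n] n by (auto simp: PF_def Q_def)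
        next
          fix i j assume "i \<in> ?A" "j \<in> ?A" "i \<noteq> j"
          then show "algebraic_semidom_class.coprime (id i) (id j)"
            by (auto simp: PF_def intro: primes_coprime)
        qed
        show "Qp d \<noteq> 0" using Qp_nz False by simp
      qed
      also have "\<dots> = 2 ^ d" using degree_Qp False by simp
      finally show ?thesis .
    qed
  qed
  also have "\<dots> < 2 ^ n" using sum_power2[of n] by (simp add: lessThan_atLeast0)
  finally show False using degree_Qp n by (simp add: Q_def)
qed



definition Vk :: "nat \<Rightarrow> gf2 poly set" where
  "Vk n = {p. \<forall>i\<ge>n. coeff p i = 0}"

lemma Vk_Suc: "Vk (Suc n) = (\<lambda>(a, q). pCons a q) ` (UNIV \<times> Vk n)"
proof (intro Set.set_eqI iffI)
  fix p assume p: "p \<in> Vk (Suc n)"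
  obtain a q where pq: "p = pCons a q" by (cases p) auto
  have "q \<in> Vk n"
    unfolding Vk_def
  proof (intro CollectI allI impI)
    fix i assume "i \<ge> n"
    then have "coeff p (Suc i) = 0" using p unfolding Vk_def by auto
    then show "coeff q i = 0" using pq by simp
  qed
  then show "p \<in> (\<lambda>(a, q). pCons a q) ` (UNIV \<times> Vk n)" using pq by auto
next
  fix p assume "p \<in> (\<lambda>(a, q). pCons a q) ` (UNIV \<times> Vk n)"
  then obtain a q where pq: "p = pCons a q" "q \<in> Vk n" by auto
  show "p \<in> Vk (Suc n)"
    unfolding Vk_def
  proof (intro CollectI allI impI)
    fix i assume "i \<ge> Suc n"
    then obtain j where "i = Suc j" "j \<ge> n" by (cases i) auto
    then show "coeff p i = 0" using pq unfolding Vk_def by auto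
  qed
qed

lemma Vk_0: "Vk 0 = {0}"
  unfolding Vk_def by (auto simp: poly_eq_iff)

lemma finite_card_Vk: "finite (Vk n) \<and> card (Vk n) = 2 ^ n"
proof (induction n)
  case 0 then show ?case by (simp add: Vk_0)
next
  case (Suc n)
  have inj: "inj_on (\<lambda>(a, q). pCons a q) (UNIV \<times> Vk n)"
    by (auto simp: inj_on_def)
  have "finite (UNIV::gf2 set)" by simp
  then have "finite ((UNIV::gf2 set) \<times> Vk n)" by (intro finite_cartesian_product) (use Suc in auto)
  moreover have "card ((UNIV::gf2 set) \<times> Vk n) = 2 * 2 ^ n" using Suc by (simp add: card_cartesian_product)
  ultimately show ?case unfolding Vk_Suc using inj card_image by (simp add: card_image)
qed

lemma finite_Vk: "finite (Vk n)" and card_Vk: "card (Vk n) = 2 ^ n"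
  using finite_card_Vk by auto

lemma Vk_degree: "n \<ge> 1 \<Longrightarrow> p \<in> Vk n \<longleftrightarrow> degree p < n"
proof
  assume n: "n \<ge> 1" and p: "p \<in> Vk n"
  show "degree p < n"
  proof (cases "p = 0")
    case True then show ?thesis using n by simp
  next
    case False
    then have "coeff p (degree p) \<noteq> 0" by simp
    then show ?thesis using p unfolding Vk_def by (metis (mono_tags) mem_Collect_eq not_less)
  qed
next
  assume "degree p < n"
  then show "p \<in> Vk n" unfolding Vk_def by (auto intro: coeff_eq_0)
qed

lemma Vk_zero: "0 \<in> Vk n" unfolding Vk_def by simp

lemma Vk_add: "p \<in> Vk n \<Longrightarrow> q \<in> Vk n \<Longrightarrow> p + q \<in> Vk n"
  unfolding Vk_def by simp

lemma gf2_neg: "- (x::gf2) = x"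
  using minus_unique[OF gf2_add_self[of x]] .

lemma gf2_poly_eq: "(p::gf2 poly) + q = 0 \<Longrightarrow> p = q"
  using minus_unique[OF gf2_poly_add_self[of p]] minus_unique[of p q] by simp

lemma half_lemma:
  fixes S :: "gf2 poly set" and \<phi> :: "gf2 poly \<Rightarrow> gf2"
  assumes fin: "finite S" and add: "\<And>a b. a \<in> S \<Longrightarrow> b \<in> S \<Longrightarrow> a + b \<in> S"
    and lin: "\<And>a b. \<phi> (a + b) = \<phi> a + \<phi> b"
    and w: "w \<in> S" "\<phi> w = 1"
  shows "2 * card {v \<in> S. \<phi> v = 1} = card S"
proof -
  let ?A0 = "{v \<in> S. \<phi> v = 0}" and ?A1 = "{v \<in> S. \<phi> v = 1}"
  have bij: "bij_betw (\<lambda>v. v + w) ?A0 ?A1"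
  proof (rule bij_betw_byWitness[where f' = "\<lambda>v. v + w"])
    show "\<forall>a\<in>?A0. a + w + w = a" by (simp add: add.assoc gf2_poly_add_self)
    show "\<forall>a\<in>?A1. a + w + w = a" by (simp add: add.assoc gf2_poly_add_self)
    show "(\<lambda>v. v + w) ` ?A0 \<subseteq> ?A1" using add w lin by auto
    show "(\<lambda>v. v + w) ` ?A1 \<subseteq> ?A0" using add w lin by (auto simp: gf2_add_self)
  qed
  have "card ?A0 = card ?A1" using bij_betw_same_card[OF bij] .
  moreover have "S = ?A0 \<union> ?A1" using gf2_cases by auto
  moreover have "?A0 \<inter> ?A1 = {}" by auto
  ultimately have "card S = card ?A0 + card ?A1"
    using fin by (metis (no_types, lifting) card_Un_disjoint finite_Un)
  then show ?thesis using \<open>card ?A0 = card ?A1\<close> by simp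
qed

definition ip :: "nat \<Rightarrow> gf2 poly \<Rightarrow> gf2 poly \<Rightarrow> gf2" where
  "ip n x v = (\<Sum>i<n. coeff x i * coeff v i)"

lemma ip_add_right: "ip n x (v + w) = ip n x v + ip n x w"
  unfolding ip_def by (simp add: distrib_left sum.distrib)

lemma ip_add_left: "ip n (x + y) v = ip n x v + ip n y v"
  unfolding ip_def by (simp add: distrib_right sum.distrib)

lemma ip_zero_right[simp]: "ip n x 0 = 0" unfolding ip_def by simp
lemma ip_zero_left[simp]: "ip n 0 v = 0" unfolding ip_def by simp

lemma ip_monom: "i < n \<Longrightarrow> ip n x (monom 1 i) = coeff x i"
proof -
  assume i: "i < n"
  have "(\<Sum>j<n. coeff x j * coeff (monom 1 i) j) = (\<Sum>j<n. if j = i then coeff x i else 0)"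
    by (rule sum.cong) (auto simp: coeff_monom)
  also have "\<dots> = coeff x i" using i by simp
  finally show ?thesis unfolding ip_def .
qed

lemma ip_monom_left: "i < n \<Longrightarrow> ip n (monom 1 i) v = coeff v i"
proof -
  assume i: "i < n"
  have "(\<Sum>j<n. coeff (monom 1 i) j * coeff v j) = (\<Sum>j<n. if j = i then coeff v i else 0)"
    by (rule sum.cong) (auto simp: coeff_monom)
  also have "\<dots> = coeff v i" using i by simp
  finally show ?thesis unfolding ip_def .
qed

lemma gf2_eq1_add: "((a::gf2) + b = 1) \<longleftrightarrow> ((a = 1) \<noteq> (b = 1))"
  using gf2_cases[of a] gf2_cases[of b] by (auto simp: gf2_add_self)

lemma half_Vk:
  assumes "x \<in> Vk n" "x \<noteq> 0"
  shows "2 * card {v \<in> Vk n. ip n x v = 1} = 2 ^ n"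
proof -
  obtain i where i: "coeff x i \<noteq> 0" using assms(2) by (meson leading_coeff_neq_0)
  then have "i < n" using assms(1) unfolding Vk_def by (metis (mono_tags) mem_Collect_eq not_less)
  have ci: "coeff x i = 1" using i gf2_cases by blast
  have "2 * card {v \<in> Vk n. ip n x v = 1} = card (Vk n)"
  proof (rule half_lemma[OF finite_Vk Vk_add ip_add_right])
    show "monom 1 i \<in> Vk n" using \<open>i < n\<close> unfolding Vk_def by (simp add: coeff_monom)
    show "ip n x (monom 1 i) = 1" using ip_monom[OF \<open>i < n\<close>] ci by simp
  qed
  then show ?thesis by (simp add: card_Vk)
qed



lemma len_filter_concat_rep:
  "length (filter Q (concat (map (\<lambda>v. replicate (f v) v) L))) =
   sum_list (map (\<lambda>v. if Q v then f v else 0) L)"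
  by (induction L) auto

lemma length_concat_rep:
  "length (concat (map (\<lambda>v. replicate (f v) v) L)) = sum_list (map f L)"
  by (induction L) auto

lemma filter_count:
  "length (filter A xs) + length (filter B xs) =
   length (filter (\<lambda>v. A v \<noteq> B v) xs) + 2 * length (filter (\<lambda>v. A v \<and> B v) xs)"
  by (induction xs) auto

lemma map2_map_map: "map2 h (map f xs) (map g xs) = map (\<lambda>x. h (f x) (g x)) xs"
  by (induction xs) auto

lemma hweight_map: "hweight (map f xs) = length (filter f xs)"
  unfolding hweight_def by (induction xs) auto

locale belov =
  fixes k s :: nat and E :: "nat set"
  assumes k4: "k \<ge> 4" and s1: "s \<ge> 1" and E_sub: "E \<subseteq> {2..k-2}"
    and bel: "\<And>I. I \<subseteq> E \<Longrightarrow> card I = Suc s \<Longrightarrow> k \<le> (\<Sum>e\<in>I. k - 1 - e)"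
begin

lemma finE: "finite E" using E_sub finite_subset by blast

lemma e_le: "e \<in> E \<Longrightarrow> 2 \<le> e \<and> e \<le> k - 2" using E_sub by auto

definition g :: "nat \<Rightarrow> gf2 poly" where
  "g e = (SOME f. irreducible f \<and> monic f \<and> degree f = k - 1 - e)"

lemma g_props:
  assumes "e \<in> E"
  shows "irreducible (g e)" "monic (g e)" "degree (g e) = k - 1 - e"
proof -
  have "k - 1 - e \<ge> 1" using e_le[OF assms] k4 by linarith
  then have "\<exists>f::gf2 poly. irreducible f \<and> monic f \<and> degree f = k - 1 - e"
    by (rule irreducible_exists)
  then have "irreducible (g e) \<and> monic (g e) \<and> degree (g e) = k - 1 - e"
    unfolding g_def by (rule someI_ex)
  then show "irreducible (g e)" "monic (g e)" "degree (g e) = k - 1 - e" by auto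
qed

lemma g_nz: "e \<in> E \<Longrightarrow> g e \<noteq> 0"
  using g_props(2) by fastforce

lemma g_prime: "e \<in> E \<Longrightarrow> prime (g e)"
proof -
  assume e: "e \<in> E"
  have "prime_elem (g e)" using g_props(1)[OF e] by (rule field_poly_irreducible_imp_prime)
  moreover have "normalize (g e) = g e" using g_props(2)[OF e] by (rule normalize_monic)
  ultimately show ?thesis by (metis prime_normalize_iff)
qed

lemma g_coprime:
  assumes "e \<in> E" "e' \<in> E" "e \<noteq> e'"
  shows "algebraic_semidom_class.coprime (g e) (g e')"
proof -
  have "k - 1 - e \<noteq> k - 1 - e'" using e_le[OF assms(1)] e_le[OF assms(2)] assms(3) k4 by linarith
  then have "g e \<noteq> g e'" using g_props(3) assms by metis
  then show ?thesis using g_prime assms by (intro primes_coprime) auto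
qed

definition U :: "nat \<Rightarrow> gf2 poly set" where
  "U e = {p \<in> Vk k. g e dvd p}"

lemma U_sub: "U e \<subseteq> Vk k" unfolding U_def by auto
lemma finite_U: "finite (U e)" using U_sub finite_Vk finite_subset by blast
lemma U_add: "a \<in> U e \<Longrightarrow> b \<in> U e \<Longrightarrow> a + b \<in> U e"
  unfolding U_def by (auto intro: Vk_add)

lemma U_image:
  assumes e: "e \<in> E"
  shows "U e = (\<lambda>h. g e * h) ` Vk (Suc e)"
proof (intro Set.set_eqI iffI)
  fix p assume "p \<in> U e"
  then have p: "p \<in> Vk k" "g e dvd p" unfolding U_def by auto
  then obtain h where h: "p = g e * h" by blast
  have "h \<in> Vk (Suc e)"
  proof (cases "h = 0")
    case True then show ?thesis by (simp add: Vk_zero)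
  next
    case False
    have "degree p = degree (g e) + degree h"
      using h False g_nz[OF e] by (simp add: degree_mult_eq)
    moreover have "degree p < k" using p(1) k4 Vk_degree by simp
    ultimately have "degree h < Suc e" using g_props(3)[OF e] e_le[OF e] k4 by linarith
    then show ?thesis using Vk_degree by simp
  qed
  then show "p \<in> (\<lambda>h. g e * h) ` Vk (Suc e)" using h by blast
next
  fix p assume "p \<in> (\<lambda>h. g e * h) ` Vk (Suc e)"
  then obtain h where h: "h \<in> Vk (Suc e)" "p = g e * h" by blast
  have "p \<in> Vk k"
  proof (cases "h = 0")
    case True then show ?thesis using h by (simp add: Vk_zero)
  next
    case False
    have "degree p = degree (g e) + degree h"
      using h False g_nz[OF e] by (simp add: degree_mult_eq)
    moreover have "degree h < Suc e" using h(1) Vk_degree by simp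
    ultimately have "degree p < k" using g_props(3)[OF e] e_le[OF e] k4 by linarith
    then show ?thesis using Vk_degree k4 by simp
  qed
  then show "p \<in> U e" using h unfolding U_def by auto
qed

lemma card_U: "e \<in> E \<Longrightarrow> card (U e) = 2 ^ Suc e"
proof -
  assume e: "e \<in> E"
  have "inj_on (\<lambda>h. g e * h) (Vk (Suc e))"
    using g_nz[OF e] by (auto simp: inj_on_def)
  then show ?thesis using U_image[OF e] card_image card_Vk by metis
qed

lemma zero_U: "0 \<in> U e" unfolding U_def by (simp add: Vk_zero)

lemma mu_le:
  assumes v: "v \<in> Vk k" "v \<noteq> 0"
  shows "card {e \<in> E. v \<in> U e} \<le> s"
proof (rule ccontr)
  assume "\<not> ?thesis"
  then have "Suc s \<le> card {e \<in> E. v \<in> U e}" by simp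
  then obtain I where I: "I \<subseteq> {e \<in> E. v \<in> U e}" "card I = Suc s" "finite I"
    by (rule obtain_subset_with_card_n)
  have IE: "I \<subseteq> E" using I by auto
  have "prod g I dvd v"
  proof (rule prod_pairwise_coprime_dvd)
    show "finite I" by fact
    fix i assume "i \<in> I" then show "g i dvd v" using I unfolding U_def by auto
  next
    fix i j assume "i \<in> I" "j \<in> I" "i \<noteq> j"
    then show "algebraic_semidom_class.coprime (g i) (g j)" using g_coprime IE by auto
  qed
  then have "degree (prod g I) \<le> degree v" using v(2) by (rule dvd_imp_degree_le)
  moreover have "degree (prod g I) = (\<Sum>e\<in>I. k - 1 - e)"
    using IE g_nz g_props(3) by (subst degree_prod_eq_sum_degree) (auto intro!: sum.cong)
  moreover have "k \<le> (\<Sum>e\<in>I. k - 1 - e)" using bel IE I(2) by blast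
  moreover have "degree v < k" using v(1) k4 Vk_degree by simp
  ultimately show False by linarith
qed

definition mu :: "gf2 poly \<Rightarrow> nat" where
  "mu v = card {e \<in> E. v \<in> U e}"

definition P :: "gf2 poly set" where
  "P = Vk k - {0}"

lemma finite_P: "finite P" unfolding P_def using finite_Vk by simp

definition wsum :: "gf2 poly \<Rightarrow> nat" where
  "wsum x = (\<Sum>v\<in>P. if ip k x v = 1 then s - mu v else 0)"

definition act :: "gf2 poly \<Rightarrow> nat \<Rightarrow> bool" where
  "act x e \<longleftrightarrow> (\<exists>w\<in>U e. ip k x w = 1)"

lemma card_act:
  assumes e: "e \<in> E"
  shows "card {v \<in> U e. ip k x v = 1} = (if act x e then 2 ^ e else 0)"
proof (cases "act x e")
  case True
  then obtain w where w: "w \<in> U e" "ip k x w = 1" unfolding act_def by auto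
  have "2 * card {v \<in> U e. ip k x v = 1} = card (U e)"
    by (rule half_lemma[OF finite_U U_add ip_add_right w])
  then show ?thesis using True card_U[OF e] by simp
next
  case False
  then have emp: "{v \<in> U e. ip k x v = 1} = {}" unfolding act_def by auto
  show ?thesis using False by (simp add: emp)
qed

lemma wsum_formula:
  assumes x: "x \<in> Vk k" "x \<noteq> 0"
  shows "int (wsum x) = int s * 2 ^ (k - 1) - (\<Sum>e\<in>E. if act x e then 2 ^ e else 0)"
proof -
  let ?\<phi> = "\<lambda>v. ip k x v = 1"
  have "int (wsum x) = (\<Sum>v\<in>P. int (if ?\<phi> v then s - mu v else 0))"
    by (simp add: wsum_def of_nat_sum)
  also have "\<dots> = (\<Sum>v\<in>P. if ?\<phi> v then int s - int (mu v) else 0)"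
  proof (rule sum.cong[OF refl])
    fix v assume "v \<in> P"
    then have "mu v \<le> s" using mu_le unfolding mu_def P_def by auto
    then show "int (if ?\<phi> v then s - mu v else 0) = (if ?\<phi> v then int s - int (mu v) else 0)"
      by simp
  qed
  also have "\<dots> = (\<Sum>v\<in>P. if ?\<phi> v then int s else 0) - (\<Sum>v\<in>P. if ?\<phi> v then int (mu v) else 0)"
    by (subst sum_subtractf[symmetric]) (auto intro!: sum.cong)
  also have "(\<Sum>v\<in>P. if ?\<phi> v then int s else 0) = int s * card {v \<in> P. ?\<phi> v}"
    using finite_P by (simp add: sum.If_cases Int_def)
  also have "{v \<in> P. ?\<phi> v} = {v \<in> Vk k. ?\<phi> v}" unfolding P_def by auto
  also have "int (card {v \<in> Vk k. ?\<phi> v}) = 2 ^ (k - 1)"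
  proof -
    have "2 * card {v \<in> Vk k. ?\<phi> v} = 2 ^ k" by (rule half_Vk[OF x])
    moreover have "(2::nat) ^ k = 2 * 2 ^ (k - 1)" using k4
      by (metis Suc_diff_1 less_le_trans power_Suc zero_less_numeral zero_less_Suc
          numeral_less_iff semiring_norm(76) le_less)
    ultimately show ?thesis by simp
  qed
  also have "(\<Sum>v\<in>P. if ?\<phi> v then int (mu v) else 0) =
      (\<Sum>v\<in>P. \<Sum>e\<in>E. if ?\<phi> v \<and> v \<in> U e then 1 else 0)"
  proof (rule sum.cong[OF refl])
    fix v assume "v \<in> P"
    have "int (mu v) = (\<Sum>e\<in>E. if v \<in> U e then 1 else 0)"
      unfolding mu_def using finE by (simp add: sum.If_cases Int_def)
    then show "(if ?\<phi> v then int (mu v) else 0) = (\<Sum>e\<in>E. if ?\<phi> v \<and> v \<in> U e then 1 else 0)"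
      by (auto intro!: sum.cong)
  qed
  also have "\<dots> = (\<Sum>e\<in>E. \<Sum>v\<in>P. if ?\<phi> v \<and> v \<in> U e then 1 else 0)"
    by (rule sum.swap)
  also have "\<dots> = (\<Sum>e\<in>E. if act x e then 2 ^ e else 0)"
  proof (rule sum.cong[OF refl])
    fix e assume e: "e \<in> E"
    have "(\<Sum>v\<in>P. if ?\<phi> v \<and> v \<in> U e then 1 else 0) = int (card {v \<in> P. ?\<phi> v \<and> v \<in> U e})"
      using finite_P by (simp add: sum.If_cases Int_def)
    also have "{v \<in> P. ?\<phi> v \<and> v \<in> U e} = {v \<in> U e. ?\<phi> v}"
      unfolding P_def using U_sub by auto
    also have "int (card {v \<in> U e. ?\<phi> v}) = (if act x e then 2 ^ e else 0)"
      using card_act[OF e] by simp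
    finally show "(\<Sum>v\<in>P. if ?\<phi> v \<and> v \<in> U e then 1 else 0) = (if act x e then 2 ^ e else (0::int))" .
  qed
  finally show ?thesis by simp
qed

end


lemma hweight_vadd_self: "hweight (vadd u u) = 0"
  unfolding hweight_def vadd_def by (induction u) auto

context belov
begin

lemma wsum_zero: "wsum 0 = 0" unfolding wsum_def by simp

lemma wsum_mod4:
  assumes x: "x \<in> Vk k"
  shows "4 dvd wsum x"
proof (cases "x = 0")
  case True then show ?thesis by (simp add: wsum_zero)
next
  case False
  have "(4::int) dvd int s * 2 ^ (k - 1)"
  proof -
    have "k - 1 = 2 + (k - 3)" using k4 by simp
    then have "(2::int) ^ (k - 1) = 2 ^ 2 * 2 ^ (k - 3)" by (metis power_add)
    then show ?thesis by simp
  qed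
  moreover have "(4::int) dvd (\<Sum>e\<in>E. if act x e then 2 ^ e else 0)"
  proof (rule dvd_sum)
    fix e assume "e \<in> E"
    then have "e \<ge> 2" using e_le by auto
    then have "e = 2 + (e - 2)" by simp
    then have "(2::int) ^ e = 2 ^ 2 * 2 ^ (e - 2)" by (metis power_add)
    then show "(4::int) dvd (if act x e then 2 ^ e else 0)" by simp
  qed
  ultimately have "(4::int) dvd int (wsum x)" using wsum_formula[OF x False] by simp
  then show ?thesis by presburger
qed

lemma wsum_ge:
  assumes x: "x \<in> Vk k" "x \<noteq> 0"
  shows "int s * 2 ^ (k - 1) - (\<Sum>e\<in>E. 2 ^ e) \<le> int (wsum x)"
proof -
  have "(\<Sum>e\<in>E. if act x e then 2 ^ e else 0) \<le> (\<Sum>e\<in>E. (2::int) ^ e)"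
    by (rule sum_mono) auto
  then show ?thesis using wsum_formula[OF x] by simp
qed

definition x0 :: "gf2 poly" where "x0 = monom 1 (k - 1)"

lemma x0_Vk: "x0 \<in> Vk k" unfolding x0_def using k4 by (simp add: Vk_degree degree_monom_eq)
lemma x0_nz: "x0 \<noteq> 0" unfolding x0_def by simp

lemma act_x0: "e \<in> E \<Longrightarrow> act x0 e"
proof -
  assume e: "e \<in> E"
  define w where "w = g e * monom 1 e"
  have mw: "monic w" unfolding w_def using g_props(2)[OF e]
    by (intro monic_mult) (auto simp: degree_monom_eq)
  have "degree w = degree (g e) + e" unfolding w_def using g_nz[OF e]
    by (simp add: degree_mult_eq degree_monom_eq)
  then have dw: "degree w = k - 1" using g_props(3)[OF e] e_le[OF e] k4 by linarith
  have "w \<in> U e" unfolding U_def using dw k4 by (simp add: Vk_degree w_def)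
  moreover have "ip k x0 w = 1"
    unfolding x0_def using k4 ip_monom_left[of "k-1" k w] mw dw by simp
  ultimately show ?thesis unfolding act_def by auto
qed

lemma wsum_x0: "int (wsum x0) = int s * 2 ^ (k - 1) - (\<Sum>e\<in>E. 2 ^ e)"
  using wsum_formula[OF x0_Vk x0_nz] act_x0 by simp

lemma card_P: "card P = 2 ^ k - 1"
  unfolding P_def using card_Vk Vk_zero finite_Vk by (simp add: card_Diff_singleton)

lemma sum_mu: "(\<Sum>v\<in>P. mu v) = (\<Sum>e\<in>E. 2 ^ Suc e - 1)"
proof -
  have "(\<Sum>v\<in>P. mu v) = (\<Sum>v\<in>P. \<Sum>e\<in>E. if v \<in> U e then 1 else 0)"
    unfolding mu_def using finE by (simp add: sum.If_cases Int_def)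
  also have "\<dots> = (\<Sum>e\<in>E. \<Sum>v\<in>P. if v \<in> U e then 1 else 0)" by (rule sum.swap)
  also have "\<dots> = (\<Sum>e\<in>E. 2 ^ Suc e - 1)"
  proof (rule sum.cong[OF refl])
    fix e assume e: "e \<in> E"
    have "(\<Sum>v\<in>P. if v \<in> U e then 1 else 0) = card (P \<inter> U e)"
      using finite_P by (simp add: sum.If_cases)
    also have "P \<inter> U e = U e - {0}" unfolding P_def using U_sub by auto
    also have "card (U e - {0}) = 2 ^ Suc e - 1"
      using card_U[OF e] zero_U finite_U by (simp add: card_Diff_singleton)
    finally show "(\<Sum>v\<in>P. if v \<in> U e then 1 else 0) = (2::nat) ^ Suc e - 1" .
  qed
  finally show ?thesis .
qed

lemma len_formula: "int (\<Sum>v\<in>P. s - mu v) = int s * (2 ^ k - 1) - (\<Sum>e\<in>E. 2 ^ Suc e - 1)"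
proof -
  have "int (\<Sum>v\<in>P. s - mu v) = (\<Sum>v\<in>P. int s - int (mu v))"
    unfolding of_nat_sum
  proof (rule sum.cong[OF refl])
    fix v assume "v \<in> P"
    then have "mu v \<le> s" using mu_le unfolding mu_def P_def by auto
    then show "int (s - mu v) = int s - int (mu v)" by simp
  qed
  also have "\<dots> = int s * int (card P) - int (\<Sum>v\<in>P. mu v)"
    by (simp add: sum_subtractf of_nat_sum)
  also have "\<dots> = int s * (2 ^ k - 1) - (\<Sum>e\<in>E. 2 ^ Suc e - 1)"
  proof -
    have "int (card P) = 2 ^ k - 1" using card_P by (simp add: of_nat_diff)
    moreover have "int (\<Sum>e\<in>E. 2 ^ Suc e - 1) = (\<Sum>e\<in>E. (2::int) ^ Suc e - 1)"
      by (simp add: of_nat_sum of_nat_diff)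
    ultimately show ?thesis using sum_mu by simp
  qed
  finally show ?thesis .
qed

theorem code_exists:
  assumes D: "int D = int s * 2 ^ (k - 1) - (\<Sum>e\<in>E. 2 ^ e)" and Dpos: "D > 0"
    and N: "int N = int s * (2 ^ k - 1) - (\<Sum>e\<in>E. 2 ^ Suc e - 1)"
  shows "\<exists>C. binary_code_NkD N k D C \<and> self_orthogonal C"
proof -
  obtain L where L: "distinct L" "set L = P" using finite_distinct_list[OF finite_P] by blast
  define cols where "cols = concat (map (\<lambda>v. replicate (s - mu v) v) L)"
  define enc where "enc x = map (\<lambda>v. ip k x v = 1) cols" for x
  have hw: "hweight (enc x) = wsum x" for x
  proof -
    have "hweight (enc x) = length (filter (\<lambda>v. ip k x v = 1) cols)"
      unfolding enc_def by (rule hweight_map)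
    also have "\<dots> = sum_list (map (\<lambda>v. if ip k x v = 1 then s - mu v else 0) L)"
      unfolding cols_def by (rule len_filter_concat_rep)
    also have "\<dots> = wsum x" unfolding wsum_def using L
      by (simp add: sum_list_distinct_conv_sum_set)
    finally show ?thesis .
  qed
  have lenc: "length cols = N"
  proof -
    have "length cols = (\<Sum>v\<in>P. s - mu v)" unfolding cols_def
      using L by (simp add: length_concat_rep sum_list_distinct_conv_sum_set)
    then have "int (length cols) = int N" using len_formula N by simp
    then show ?thesis by simp
  qed
  have len_enc: "length (enc x) = N" for x unfolding enc_def using lenc by simp
  have enc_add: "vadd (enc x) (enc y) = enc (x + y)" for x y
    unfolding vadd_def enc_def map2_map_map by (simp add: ip_add_left gf2_eq1_add)
  have enc0: "enc 0 = Defs.zero_vec N" unfolding enc_def Defs.zero_vec_def using lenc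
    by (simp add: map_replicate_const)
  have hw_ge: "D \<le> hweight (enc x)" if "x \<in> Vk k" "x \<noteq> 0" for x
    using wsum_ge[OF that] D hw[of x] by simp
  define C where "C = enc ` Vk k"
  have inj: "inj_on enc (Vk k)"
  proof (rule inj_onI)
    fix x y assume xy: "x \<in> Vk k" "y \<in> Vk k" "enc x = enc y"
    have "hweight (enc (x + y)) = 0" using hweight_vadd_self enc_add xy(3) by metis
    moreover have "x + y \<in> Vk k" using xy by (simp add: Vk_add)
    ultimately have "x + y = 0" using hw_ge[of "x + y"] Dpos by fastforce
    then show "x = y" by (rule gf2_poly_eq)
  qed
  have lin: "binary_linear_code N C"
    unfolding binary_linear_code_def C_def
  proof (intro conjI)
    show "enc ` Vk k \<subseteq> {u. length u = N}" using len_enc by auto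
    show "Defs.zero_vec N \<in> enc ` Vk k" using enc0 Vk_zero by (metis image_eqI)
    show "\<forall>u\<in>enc ` Vk k. \<forall>v\<in>enc ` Vk k. vadd u v \<in> enc ` Vk k"
      using enc_add Vk_add by auto
  qed
  have cardC: "card C = 2 ^ k" unfolding C_def using card_image[OF inj] card_Vk by simp
  have mind: "\<forall>u\<in>C. u \<noteq> Defs.zero_vec N \<longrightarrow> D \<le> hweight u"
    unfolding C_def using hw_ge enc0 by auto
  have exD: "\<exists>u\<in>C. u \<noteq> Defs.zero_vec N \<and> hweight u = D"
  proof (intro bexI conjI)
    show "enc x0 \<in> C" unfolding C_def using x0_Vk by simp
    have "hweight (enc x0) = D" using hw[of x0] wsum_x0 D by simp
    then show "hweight (enc x0) = D" .
    show "enc x0 \<noteq> Defs.zero_vec N"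
    proof
      assume "enc x0 = Defs.zero_vec N"
      then have "hweight (enc x0) = 0" unfolding Defs.zero_vec_def hweight_def by simp
      then show False using \<open>hweight (enc x0) = D\<close> Dpos by simp
    qed
  qed
  have so: "self_orthogonal C"
    unfolding self_orthogonal_def C_def
  proof (intro ballI)
    fix u v assume "u \<in> enc ` Vk k" "v \<in> enc ` Vk k"
    then obtain x y where xy: "x \<in> Vk k" "y \<in> Vk k" "u = enc x" "v = enc y" by auto
    let ?A = "\<lambda>c. ip k x c = 1" and ?B = "\<lambda>c. ip k y c = 1"
    have "length (filter ?A cols) + length (filter ?B cols) =
        length (filter (\<lambda>c. ?A c \<noteq> ?B c) cols) + 2 * length (filter (\<lambda>c. ?A c \<and> ?B c) cols)"
      by (rule filter_count)
    moreover have "length (filter ?A cols) = wsum x" using hw[of x] unfolding enc_def hweight_map .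
    moreover have "length (filter ?B cols) = wsum y" using hw[of y] unfolding enc_def hweight_map .
    moreover have "length (filter (\<lambda>c. ?A c \<noteq> ?B c) cols) = wsum (x + y)"
      using hw[of "x + y"] unfolding enc_def hweight_map by (simp add: ip_add_left gf2_eq1_add)
    moreover have "4 dvd wsum x" "4 dvd wsum y" "4 dvd wsum (x + y)"
      using wsum_mod4 xy Vk_add by auto
    ultimately have "even (length (filter (\<lambda>c. ?A c \<and> ?B c) cols))" by presburger
    moreover have "map2 (\<and>) u v = map (\<lambda>c. ?A c \<and> ?B c) cols"
      unfolding xy enc_def map2_map_map by simp
    ultimately show "binner_zero u v" unfolding binner_zero_def
      by (simp add: hweight_map[unfolded hweight_def])
  qed
  show ?thesis unfolding binary_code_NkD_def using lin cardC mind exD so by blast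
qed

end


lemma bin_rep: "r < 2 ^ n \<Longrightarrow> \<exists>F \<subseteq> {..<n}. (\<Sum>f\<in>F. (2::nat) ^ f) = r"
proof (induction n arbitrary: r)
  case 0 then show ?case by (intro exI[of _ "{}"]) simp
next
  case (Suc n)
  show ?case
  proof (cases "r < 2 ^ n")
    case True
    then obtain F where "F \<subseteq> {..<n}" "(\<Sum>f\<in>F. (2::nat) ^ f) = r" using Suc.IH by blast
    then show ?thesis by (intro exI[of _ F]) auto
  next
    case False
    then have "r - 2 ^ n < 2 ^ n" using Suc.prems by simp
    then obtain F where F: "F \<subseteq> {..<n}" "(\<Sum>f\<in>F. (2::nat) ^ f) = r - 2 ^ n" using Suc.IH by blast
    have "n \<notin> F" using F by auto
    moreover have "finite F" using F finite_subset by blast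
    ultimately have "(\<Sum>f\<in>insert n F. (2::nat) ^ f) = 2 ^ n + (r - 2 ^ n)" using F by simp
    also have "\<dots> = r" using False by simp
    finally show ?thesis using F by (intro exI[of _ "insert n F"]) auto
  qed
qed

lemma sum_distinct_pos:
  "finite A \<Longrightarrow> 0 \<notin> A \<Longrightarrow> card A * (card A + 1) \<le> 2 * (\<Sum>a\<in>A. (a::nat))"
proof (induction "card A" arbitrary: A)
  case 0 then show ?case by simp
next
  case (Suc n)
  then have ne: "A \<noteq> {}" by auto
  define a where "a = Max A"
  have aA: "a \<in> A" using Max_in[OF Suc.prems(1) ne] a_def by simp
  have "A \<subseteq> {1..a}" using Suc.prems a_def Max_ge[OF Suc.prems(1)]
    by (metis atLeastAtMost_iff less_one not_le subsetI)
  then have "card A \<le> a" using card_mono[of "{1..a}" A] by simp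
  have c: "card (A - {a}) = n" using Suc.hyps(2) aA Suc.prems(1) by simp
  have IH: "n * (n + 1) \<le> 2 * (\<Sum>x\<in>A - {a}. x)"
    using Suc.hyps(1)[of "A - {a}"] c Suc.prems by simp
  have "(\<Sum>x\<in>A. x) = a + (\<Sum>x\<in>A - {a}. x)" using aA Suc.prems(1) by (simp add: sum.remove)
  then show ?case using IH \<open>card A \<le> a\<close> Suc.hyps(2)[symmetric]
    by (simp add: algebra_simps)
qed

lemma sum_range_e: "2 * (\<Sum>e\<in>{2..j+2}. e + 1) = (j + 6) * (j + 1 :: nat)"
  by (induction j) (auto simp: algebra_simps)

lemma geom_rev: "(\<Sum>i<n. (2::int) ^ (n - Suc i)) = 2 ^ n - 1"
proof (induction n)
  case 0 then show ?case by simp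
next
  case (Suc n)
  have "(\<Sum>i<Suc n. (2::int) ^ (Suc n - Suc i)) = 2 ^ n + (\<Sum>i<n. 2 ^ (n - Suc i))"
    by (subst sum.lessThan_Suc_shift) simp
  then show ?case using Suc by simp
qed



lemma ceiling_AB:
  fixes A B :: int and i :: nat
  assumes "0 \<le> B" "B < 2 ^ i" "int D = 2 ^ i * A - B"
  shows "\<lceil>real D / 2 ^ i\<rceil> = A"
proof (rule ceiling_unique)
  have "real D = 2 ^ i * real_of_int A - real_of_int B"
    using arg_cong[OF assms(3), of real_of_int] by simp
  then have x: "real D / 2 ^ i = real_of_int A - real_of_int B / 2 ^ i"
    by (simp add: field_simps)
  have "real_of_int B / 2 ^ i < 1" using assms(2)
    by (simp add: divide_less_eq)
  then show "real_of_int A - 1 < real D / 2 ^ i" using x by simp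
  have "0 \<le> real_of_int B / 2 ^ i" using assms(1) by simp
  then show "real D / 2 ^ i \<le> real_of_int A" using x by simp
qed

lemma griesmer_formula:
  assumes k: "k \<ge> 1" and E: "E \<subseteq> {..<k}"
    and D: "int D = int s * 2 ^ (k - 1) - (\<Sum>e\<in>E. 2 ^ e)"
  shows "int (griesmer_length k D) = int s * (2 ^ k - 1) - (\<Sum>e\<in>E. 2 ^ Suc e - 1)"
proof -
  have finE: "finite E" using E finite_subset by blast
  define A where "A i = int s * 2 ^ (k - 1 - i) - (\<Sum>e\<in>{e \<in> E. i \<le> e}. 2 ^ (e - i))" for i
  define B where "B i = (\<Sum>e\<in>{e \<in> E. e < i}. (2::int) ^ e)" for i
  have ceil: "\<lceil>real D / 2 ^ i\<rceil> = A i" if i: "i < k" for i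
  proof (rule ceiling_AB)
    show "0 \<le> B i" unfolding B_def by (simp add: sum_nonneg)
    have "B i \<le> (\<Sum>e<i. (2::int) ^ e)" unfolding B_def
      by (rule sum_mono2) auto
    also have "\<dots> = 2 ^ i - 1" by (induction i) (auto simp: algebra_simps)
    finally show "B i < 2 ^ i" by simp
    have split: "(\<Sum>e\<in>E. (2::int) ^ e) = (\<Sum>e\<in>{e \<in> E. i \<le> e}. 2 ^ e) + B i"
      unfolding B_def using finE
      by (subst sum.union_disjoint[symmetric]) (auto intro!: sum.cong)
    have hi: "(\<Sum>e\<in>{e \<in> E. i \<le> e}. (2::int) ^ e) = 2 ^ i * (\<Sum>e\<in>{e \<in> E. i \<le> e}. 2 ^ (e - i))"
      unfolding sum_distrib_left
    proof (rule sum.cong[OF refl])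
      fix e assume "e \<in> {e \<in> E. i \<le> e}"
      then have "e = i + (e - i)" by auto
      then show "(2::int) ^ e = 2 ^ i * 2 ^ (e - i)" by (metis power_add)
    qed
    have "k - 1 = i + (k - 1 - i)" using i by simp
    then have "(2::int) ^ (k - 1) = 2 ^ i * 2 ^ (k - 1 - i)" by (metis power_add)
    then show "int D = 2 ^ i * A i - B i"
      unfolding D A_def using split hi by (simp add: algebra_simps)
  qed
  have Anonneg: "0 \<le> A i" if "i < k" for i
  proof -
    have "0 \<le> real D / 2 ^ i" by simp
    then have "0 \<le> \<lceil>real D / 2 ^ i\<rceil>" by linarith
    then show ?thesis using ceil[OF that] by simp
  qed
  have "int (griesmer_length k D) = (\<Sum>i<k. A i)"
    unfolding griesmer_length_def of_nat_sum
    by (rule sum.cong[OF refl]) (simp add: ceil Anonneg)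
  also have "\<dots> = (\<Sum>i<k. int s * 2 ^ (k - 1 - i)) - (\<Sum>i<k. \<Sum>e\<in>{e \<in> E. i \<le> e}. 2 ^ (e - i))"
    unfolding A_def by (simp add: sum_subtractf)
  also have "(\<Sum>i<k. int s * 2 ^ (k - 1 - i)) = int s * (2 ^ k - 1)"
    using geom_rev[of k] by (simp add: sum_distrib_left[symmetric])
  also have "(\<Sum>i<k. \<Sum>e\<in>{e \<in> E. i \<le> e}. (2::int) ^ (e - i)) = (\<Sum>e\<in>E. 2 ^ Suc e - 1)"
  proof -
    have "(\<Sum>i<k. \<Sum>e\<in>{e \<in> E. i \<le> e}. (2::int) ^ (e - i)) =
        (\<Sum>i<k. \<Sum>e\<in>E. if i \<le> e then 2 ^ (e - i) else 0)"
      using finE by (simp add: sum.If_cases Int_def)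
    also have "\<dots> = (\<Sum>e\<in>E. \<Sum>i<k. if i \<le> e then 2 ^ (e - i) else 0)" by (rule sum.swap)
    also have "\<dots> = (\<Sum>e\<in>E. 2 ^ Suc e - 1)"
    proof (rule sum.cong[OF refl])
      fix e assume "e \<in> E"
      then have ek: "e < k" using E by auto
      have "(\<Sum>i<k. if i \<le> e then (2::int) ^ (e - i) else 0) = (\<Sum>i\<in>{..<k} \<inter> {i. i \<le> e}. 2 ^ (e - i))"
        by (simp add: sum.If_cases)
      also have "{..<k} \<inter> {i. i \<le> e} = {..<Suc e}" using ek by auto
      also have "(\<Sum>i<Suc e. (2::int) ^ (e - i)) = 2 ^ Suc e - 1"
        using geom_rev[of "Suc e"] by simp
      finally show "(\<Sum>i<k. if i \<le> e then (2::int) ^ (e - i) else 0) = 2 ^ Suc e - 1" .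
    qed
    finally show ?thesis .
  qed
  finally show ?thesis .
qed



theorem theorem4p8:
  fixes k D :: nat and m :: int
  assumes "k \<ge> 4"
    and "m \<ge> min \<lceil>real ((k + 2) * (k - 3)) / (2 * real k)\<rceil>
                   \<lceil>sqrt (2 * real k + 1 / 4) - 3 / 2\<rceil> - 1"
    and "D > 0" and "4 dvd D"
    and "int D \<ge> m * 2 ^ (k - 1)"
  shows "\<exists>C. binary_code_NkD (griesmer_length k D) k D C \<and> self_orthogonal C"
proof -
  note k4 = assms(1) and mhyp = assms(2) and Dpos = assms(3) and D4 = assms(4) and Dm = assms(5)
  define q where "q = (2::nat) ^ (k - 1)"
  have qsplit: "q = 4 * 2 ^ (k - 3)"
  proof -
    have "k - 1 = 2 + (k - 3)" using k4 by simp
    then have "(2::nat) ^ (k - 1) = 2 ^ 2 * 2 ^ (k - 3)" by (metis power_add)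
    then show ?thesis unfolding q_def by simp
  qed
  have qpos: "q > 0" unfolding q_def by simp
  define s where "s = (D + q - 1) div q"
  have dm: "D + q - 1 = s * q + (D + q - 1) mod q" unfolding s_def by simp
  have "(D + q - 1) mod q < q" using qpos by simp
  then have sq_ge: "D \<le> s * q" using dm qpos by linarith
  have sq_lt: "s * q < D + q" using dm qpos by linarith
  have s1: "s \<ge> 1" using sq_ge Dpos by (cases s) auto
  define r where "r = s * q - D"
  have r_lt: "r < q" unfolding r_def using sq_lt sq_ge by linarith
  have r4: "4 dvd r" unfolding r_def using D4 qsplit by (simp add: dvd_diff_nat)
  have "r div 4 < 2 ^ (k - 3)" using r_lt qsplit r4 by auto
  then obtain F where F: "F \<subseteq> {..<k-3}" "(\<Sum>f\<in>F. (2::nat) ^ f) = r div 4"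
    using bin_rep by blast
  define E where "E = (\<lambda>f. f + 2) ` F"
  have finF: "finite F" using F finite_subset by blast
  have sumE: "(\<Sum>e\<in>E. (2::nat) ^ e) = r"
  proof -
    have "(\<Sum>e\<in>E. (2::nat) ^ e) = (\<Sum>f\<in>F. 2 ^ (f + 2))"
      unfolding E_def by (subst sum.reindex) (auto simp: inj_on_def)
    also have "\<dots> = 4 * (\<Sum>f\<in>F. 2 ^ f)" by (simp add: sum_distrib_left power_add mult.commute)
    also have "\<dots> = r" using F r4 by simp
    finally show ?thesis .
  qed
  have E_sub: "E \<subseteq> {2..k-2}" unfolding E_def using F k4 by auto
  have bel: "k \<le> (\<Sum>e\<in>I. k - 1 - e)" if I: "I \<subseteq> E" "card I = Suc s" for I
  proof -
    have finI: "finite I" using I(2) by (intro card_ge_0_finite) simp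
    have "I \<noteq> {}" using I(2) by auto
    then obtain e0 where e0: "e0 \<in> I" by blast
    have "r > 0"
    proof -
      have "e0 \<in> E" using e0 I by auto
      moreover have "finite E" unfolding E_def using finF by simp
      ultimately have "(2::nat) ^ e0 \<le> (\<Sum>e\<in>E. 2 ^ e)"
        using member_le_sum[of e0 E "\<lambda>e. (2::nat) ^ e"] by simp
      moreover have "(0::nat) < 2 ^ e0" by simp
      ultimately show ?thesis using sumE by linarith
    qed
    then have "D < s * q" unfolding r_def by simp
    then have "int D < int (s * q)" by (simp only: of_nat_less_iff)
    then have "int D < int s * int q" by simp
    moreover have "m * int q \<le> int D" using Dm unfolding q_def by simp
    ultimately have "m * int q < int s * int q" by linarith
    then have "m < int s" using qpos by (simp add: mult_less_cancel_right)
    then have smin: "min \<lceil>real ((k + 2) * (k - 3)) / (2 * real k)\<rceil>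
                   \<lceil>sqrt (2 * real k + 1 / 4) - 3 / 2\<rceil> \<le> int s" using mhyp by linarith
    have Ibd: "e \<le> k - 2" "2 \<le> e" if "e \<in> I" for e using that I E_sub by auto
    show ?thesis
    proof (cases "\<lceil>sqrt (2 * real k + 1 / 4) - 3 / 2\<rceil> \<le> int s")
      case True
      then have "sqrt (2 * real k + 1 / 4) - 3 / 2 \<le> real s" by (simp add: ceiling_le_iff)
      then have sq: "sqrt (2 * real k + 1 / 4) \<le> real s + 3 / 2" by simp
      have "2 * real k + 1 / 4 = (sqrt (2 * real k + 1 / 4)) ^ 2" by simp
      also have "\<dots> \<le> (real s + 3 / 2) ^ 2" by (rule power_mono[OF sq]) simp
      finally have "2 * real k + 1 / 4 \<le> (real s + 3 / 2) ^ 2" .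
      then have "2 * real k \<le> real ((s + 1) * (s + 2))" by (simp add: power2_eq_square algebra_simps)
      then have k2: "2 * k \<le> (s + 1) * (s + 2)" by linarith
      define J where "J = (\<lambda>e. k - 1 - e) ` I"
      have inj: "inj_on (\<lambda>e. k - 1 - e) I"
        by (rule inj_onI) (use Ibd in fastforce)
      have cJ: "card J = Suc s" unfolding J_def using card_image[OF inj] I(2) by simp
      have J0: "0 \<notin> J" unfolding J_def using Ibd by fastforce
      have finJ: "finite J" unfolding J_def using finI by simp
      have "card J * (card J + 1) \<le> 2 * (\<Sum>a\<in>J. a)" by (rule sum_distinct_pos[OF finJ J0])
      moreover have "(\<Sum>a\<in>J. a) = (\<Sum>e\<in>I. k - 1 - e)" unfolding J_def using inj
        by (simp add: sum.reindex)
      ultimately show ?thesis using cJ k2 by (simp add: algebra_simps)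
    next
      case False
      then have "\<lceil>real ((k + 2) * (k - 3)) / (2 * real k)\<rceil> \<le> int s" using smin by linarith
      then have "real ((k + 2) * (k - 3)) / (2 * real k) \<le> real s" by (simp add: ceiling_le_iff)
      then have "real ((k + 2) * (k - 3)) \<le> real s * (2 * real k)" using k4
        by (simp add: divide_le_eq)
      moreover have "real s * (2 * real k) = real (2 * k * s)" by simp
      ultimately have "real ((k + 2) * (k - 3)) \<le> real (2 * k * s)" by simp
      then have M1: "(k + 2) * (k - 3) \<le> 2 * k * s" by (simp only: of_nat_le_iff)
      have split: "(\<Sum>e\<in>I. k - 1 - e) + (\<Sum>e\<in>I. e + 1) = Suc s * k"
      proof -
        have "(\<Sum>e\<in>I. k - 1 - e) + (\<Sum>e\<in>I. e + 1) = (\<Sum>e\<in>I. k)"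
          unfolding sum.distrib[symmetric] by (rule sum.cong[OF refl]) (use Ibd k4 in fastforce)
        then show ?thesis using I(2) by simp
      qed
      have "(\<Sum>e\<in>I. e + 1) \<le> (\<Sum>e\<in>{2..k-2}. e + 1)"
        by (rule sum_mono2) (use I E_sub in auto)
      moreover have "2 * (\<Sum>e\<in>{2..k-2}. e + 1) = (k + 2) * (k - 3)"
      proof -
        obtain j where j: "k = j + 4" using k4 by (metis add.commute le_Suc_ex)
        then have "{2..k-2} = {2..j+2}" "k + 2 = j + 6" "k - 3 = j + 1" by auto
        then show ?thesis using sum_range_e[of j] by simp
      qed
      ultimately have "2 * (\<Sum>e\<in>I. e + 1) \<le> 2 * k * s" using M1 by linarith
      then show ?thesis using split by (simp add: algebra_simps)
    qed
  qed
  interpret belov k s E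
    using k4 s1 E_sub bel by unfold_locales auto
  have Dint: "int D = int s * 2 ^ (k - 1) - (\<Sum>e\<in>E. 2 ^ e)"
  proof -
    have "int D = int (s * q) - int r" unfolding r_def using sq_ge by simp
    also have "int r = int (\<Sum>e\<in>E. 2 ^ e)" using sumE by simp
    also have "\<dots> = (\<Sum>e\<in>E. 2 ^ e)" by (simp add: of_nat_sum)
    finally show ?thesis unfolding q_def by simp
  qed
  have Nint: "int (griesmer_length k D) = int s * (2 ^ k - 1) - (\<Sum>e\<in>E. 2 ^ Suc e - 1)"
  proof (rule griesmer_formula)
    show "k \<ge> 1" using k4 by simp
    show "E \<subseteq> {..<k}"
    proof
      fix x assume "x \<in> E"
      then have "x \<le> k - 2" using E_sub by auto
      then show "x \<in> {..<k}" using k4 by simp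
    qed
    show "int D = int s * 2 ^ (k - 1) - (\<Sum>e\<in>E. 2 ^ e)" by (rule Dint)
  qed
  show ?thesis by (rule code_exists[OF Dint Dpos Nint])
qed


end
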